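(* Let $\alpha$ be an algebraic number. If the minimal polynomial of $\alpha$ over $\mathbb{Q}$ contains a nonzero term of odd degree, then $\mathbb{Q}(\alpha) = \mathbb{Q}(\alpha^2)$. Consequently, for any real number field $K$, the set of generators $\alpha$ of $K$ (i.e. $\mathbb{Q}(\alpha)=K$) whose minimal polynomial contains a nonzero term of odd degree is dense in $\mathbb{R}$.
   Context: A real number field is a field $K\subset\mathbb{R}$ with $[K:\mathbb{Q}]<\infty$. *)

theory Defs
  imports "HOL-Analysis.Analysis" "HOL-Computational_Algebra.Polynomial"
begin

definition is_subfield :: "'a::field_char_0 set \<Rightarrow> bool" where
  "is_subfield K \<longleftrightarrow> 0 \<in> K \<and> 1 \<in> K \<and>
     (\<forall>x\<in>K. \<forall>y\<in>K. x + y \<in> K \<and> x - y \<in> K \<and> x * y \<in> K) \<and>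
     (\<forall>x\<in>K. x \<noteq> 0 \<longrightarrow> inverse x \<in> K)"

definition gen_field :: "'a::field_char_0 \<Rightarrow> 'a set" where
  "gen_field a = \<Inter> {K. is_subfield K \<and> a \<in> K}"

definition is_min_poly :: "'a::field_char_0 \<Rightarrow> rat poly \<Rightarrow> bool" where
  "is_min_poly a p \<longleftrightarrow> p \<noteq> 0 \<and> lead_coeff p = 1 \<and>
     poly (map_poly of_rat p) a = 0 \<and>
     (\<forall>q :: rat poly. q \<noteq> 0 \<and> poly (map_poly of_rat q) a = 0 \<longrightarrow> degree p \<le> degree q)"

definition min_poly_has_odd_term :: "'a::field_char_0 \<Rightarrow> bool" where
  "min_poly_has_odd_term a \<longleftrightarrow>
     (\<exists>p. is_min_poly a p \<and> (\<exists>k. odd k \<and> coeff p k \<noteq> 0))"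

text \<open>A real number field: a subfield of R of finite degree over Q
  (finitely spanned as a Q-vector space).\<close>
definition real_number_field :: "real set \<Rightarrow> bool" where
  "real_number_field K \<longleftrightarrow> is_subfield K \<and>
     (\<exists>B. finite B \<and> B \<subseteq> K \<and>
        (\<forall>x\<in>K. \<exists>c :: real \<Rightarrow> rat. x = (\<Sum>b\<in>B. of_rat (c b) * b)))"

end

theory Submission
  imports Defs "HOL-Computational_Algebra.Fundamental_Theorem_Algebra"
begin

lemma sf_0: "is_subfield K \<Longrightarrow> 0 \<in> K" by (simp add: is_subfield_def)
lemma sf_1: "is_subfield K \<Longrightarrow> 1 \<in> K" by (simp add: is_subfield_def)
lemma sf_add: "is_subfield K \<Longrightarrow> x \<in> K \<Longrightarrow> y \<in> K \<Longrightarrow> x + y \<in> K" by (simp add: is_subfield_def)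
lemma sf_diff: "is_subfield K \<Longrightarrow> x \<in> K \<Longrightarrow> y \<in> K \<Longrightarrow> x - y \<in> K" by (simp add: is_subfield_def)
lemma sf_mult: "is_subfield K \<Longrightarrow> x \<in> K \<Longrightarrow> y \<in> K \<Longrightarrow> x * y \<in> K" by (simp add: is_subfield_def)
lemma sf_inverse: "is_subfield K \<Longrightarrow> x \<in> K \<Longrightarrow> inverse x \<in> K"
  by (cases "x = 0") (auto simp: is_subfield_def)
lemma sf_divide: "is_subfield K \<Longrightarrow> x \<in> K \<Longrightarrow> y \<in> K \<Longrightarrow> x / y \<in> K"
  by (simp add: divide_inverse sf_mult sf_inverse)
lemma sf_uminus: "is_subfield K \<Longrightarrow> x \<in> K \<Longrightarrow> - x \<in> K"
  using sf_diff[of K 0 x] sf_0[of K] by simp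
lemma sf_power: "is_subfield K \<Longrightarrow> x \<in> K \<Longrightarrow> x ^ n \<in> K"
  by (induction n) (auto intro: sf_mult sf_1)
lemma sf_sum: "is_subfield K \<Longrightarrow> (\<And>i. i \<in> A \<Longrightarrow> f i \<in> K) \<Longrightarrow> sum f A \<in> K"
  by (induction A rule: infinite_finite_induct) (auto intro: sf_add sf_0)
lemma sf_of_nat: "is_subfield K \<Longrightarrow> of_nat n \<in> K"
  by (induction n) (auto intro: sf_add sf_1 sf_0)
lemma sf_of_int: "is_subfield K \<Longrightarrow> of_int n \<in> K"
proof (cases "n \<ge> 0")
  case True
  assume K: "is_subfield K"
  then show ?thesis using True sf_of_nat[OF K, of "nat n"] by simp
next
  case False
  assume K: "is_subfield K"
  then show ?thesis using False sf_uminus[OF K sf_of_nat[OF K, of "nat (-n)"]] by simp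
qed
lemma sf_of_rat: fixes K :: "'a::field_char_0 set" shows "is_subfield K \<Longrightarrow> of_rat q \<in> K"
proof -
  assume K: "is_subfield K"
  obtain a b where "q = Fract a b" "b > 0" by (cases q) auto
  then have "(of_rat q::'a) = of_int a / of_int b" by (simp add: of_rat_rat)
  then show ?thesis using sf_divide[OF K sf_of_int[OF K, of a] sf_of_int[OF K, of b]] by simp
qed

definition gen_set :: "'a::field_char_0 set \<Rightarrow> 'a set" where
  "gen_set S = \<Inter> {K. is_subfield K \<and> S \<subseteq> K}"

lemma sf_UNIV: "is_subfield (UNIV :: 'a::field_char_0 set)" by (simp add: is_subfield_def)

lemma sf_Inter: "(\<And>K. K \<in> F \<Longrightarrow> is_subfield K) \<Longrightarrow> is_subfield (\<Inter> F)"
  unfolding is_subfield_def by blast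

lemma gen_set_sf: "is_subfield (gen_set S)"
  unfolding gen_set_def by (rule sf_Inter) auto
lemma gen_set_sub: "S \<subseteq> gen_set S" unfolding gen_set_def by auto
lemma gen_set_min: "is_subfield K \<Longrightarrow> S \<subseteq> K \<Longrightarrow> gen_set S \<subseteq> K"
  unfolding gen_set_def by auto
lemma gen_field_set: "gen_field a = gen_set {a}"
  unfolding gen_field_def gen_set_def by auto
lemma gen_field_sf: "is_subfield (gen_field a)" by (simp add: gen_field_set gen_set_sf)
lemma gen_field_mem: "a \<in> gen_field a" by (simp add: gen_field_set gen_set_sub[of "{a}", simplified])
lemma gen_field_min: "is_subfield K \<Longrightarrow> a \<in> K \<Longrightarrow> gen_field a \<subseteq> K"
  by (simp add: gen_field_set gen_set_min)

lemma gen_field_shift: "gen_field (a + of_rat q) = gen_field a"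
proof
  show "gen_field (a + of_rat q) \<subseteq> gen_field a"
    by (intro gen_field_min gen_field_sf sf_add gen_field_mem sf_of_rat)
  have "a = (a + of_rat q) - of_rat q" by simp
  also have "\<dots> \<in> gen_field (a + of_rat q)"
    by (intro gen_field_sf sf_diff gen_field_mem sf_of_rat)
  finally show "gen_field a \<subseteq> gen_field (a + of_rat q)"
    by (intro gen_field_min gen_field_sf)
qed

lemma map_of_rat_add: "map_poly of_rat (p + q) = (map_poly of_rat p + map_poly of_rat q :: 'a::field_char_0 poly)"
  by (rule poly_eqI) (simp add: coeff_map_poly of_rat_add)
lemma map_of_rat_mult: "map_poly of_rat (p * q) = (map_poly of_rat p * map_poly of_rat q :: 'a::field_char_0 poly)"
  by (rule poly_eqI) (simp add: coeff_map_poly coeff_mult of_rat_sum of_rat_mult)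
lemma map_of_rat_const: "map_poly of_rat [:c:] = ([:of_rat c:] :: 'a::field_char_0 poly)"
  by (rule poly_eqI) (simp add: coeff_map_poly coeff_pCons split: nat.split)

lemma poly_of_rat_pcompose:
  "poly (map_poly of_rat (p \<circ>\<^sub>p q)) (x::'a::field_char_0) = poly (map_poly of_rat p) (poly (map_poly of_rat q) x)"
proof (induction p)
  case 0
  then show ?case by simp
next
  case (pCons a p)
  then show ?case by (simp add: pcompose_pCons map_of_rat_add map_of_rat_mult map_of_rat_const map_poly_pCons)
qed

lemma poly_of_rat_sum_le:
  assumes "degree p \<le> N"
  shows "poly (map_poly of_rat p) (x::'a::field_char_0) = (\<Sum>i\<le>N. of_rat (coeff p i) * x ^ i)"
proof -
  have "poly (map_poly of_rat p) x = (\<Sum>i\<le>degree p. of_rat (coeff p i) * x ^ i)"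
    by (simp add: poly_altdef degree_map_poly coeff_map_poly)
  also have "\<dots> = (\<Sum>i\<le>N. of_rat (coeff p i) * x ^ i)"
    by (rule sum.mono_neutral_left) (use assms in \<open>auto simp: coeff_eq_0\<close>)
  finally show ?thesis .
qed

lemma poly_of_rat_in_sf:
  "is_subfield K \<Longrightarrow> x \<in> K \<Longrightarrow> poly (map_poly of_rat p) x \<in> K"
  by (subst poly_of_rat_sum_le[OF order.refl]) (intro sf_sum sf_mult sf_of_rat sf_power)

lemma part1:
  fixes a :: "'a::field_char_0"
  assumes mp: "is_min_poly a p" and k: "odd k" "coeff p k \<noteq> 0"
  shows "gen_field a = gen_field (a^2)"
proof
  show "gen_field (a^2) \<subseteq> gen_field a"
    by (intro gen_field_min gen_field_sf sf_power gen_field_mem)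
next
  define L where "L = gen_field (a^2)"
  have L: "is_subfield L" by (simp add: L_def gen_field_sf)
  have a2: "a^2 \<in> L" by (simp add: L_def gen_field_mem)
  define d where "d = degree p"
  have kd: "k \<le> d" using k(2) d_def le_degree by blast
  have k1: "k \<ge> 1" using k(1) by (cases k) auto
  obtain e where de: "d = Suc e" using kd k1 by (cases d) auto
  define qo where "qo = (\<Sum>j\<le>e. monom (if even j then coeff p (Suc j) else 0) j)"
  have cqo: "coeff qo j = (if j \<le> e \<and> even j then coeff p (Suc j) else 0)" for j
    by (simp add: qo_def coeff_sum coeff_monom)
  have dqo: "degree qo \<le> e" by (rule degree_le) (simp add: cqo)
  have qo0: "qo \<noteq> 0"
  proof
    assume "qo = 0"
    then have "coeff qo (k - 1) = 0" by simp
    moreover have "coeff qo (k - 1) = coeff p k" using kd k1 k(1) de by (simp add: cqo)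
    ultimately show False using k(2) by simp
  qed
  define Od where "Od = poly (map_poly of_rat qo) a"
  have Od_eq: "Od = (\<Sum>j\<le>e. of_rat (coeff qo j) * a ^ j)"
    unfolding Od_def by (rule poly_of_rat_sum_le[OF dqo])
  have evpow: "even j \<Longrightarrow> a ^ j = (a^2) ^ (j div 2)" for j
    by (metis dvd_mult_div_cancel power_mult)
  have apow: "even j \<Longrightarrow> a ^ j \<in> L" for j
    using evpow[of j] sf_power[OF L a2, of "j div 2"] by simp
  have OdL: "Od \<in> L" unfolding Od_eq
    by (intro sf_sum[OF L]) (auto simp: cqo intro!: sf_mult[OF L] sf_of_rat[OF L] apow sf_0[OF L])
  define E where "E = (\<Sum>i\<le>d. if even i then of_rat (coeff p i) * a ^ i else 0)"
  have EL: "E \<in> L" unfolding E_def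
    by (intro sf_sum[OF L]) (auto intro!: sf_mult[OF L] sf_of_rat[OF L] apow sf_0[OF L])
  have "poly (map_poly of_rat p) a = (\<Sum>i\<le>d. of_rat (coeff p i) * a ^ i)"
    by (rule poly_of_rat_sum_le) (simp add: d_def)
  also have "\<dots> = E + (\<Sum>i\<le>d. if odd i then of_rat (coeff p i) * a ^ i else 0)"
    unfolding E_def by (subst sum.distrib[symmetric]) (rule sum.cong, auto)
  also have "(\<Sum>i\<le>d. if odd i then of_rat (coeff p i) * a ^ i else 0)
      = (\<Sum>j\<le>e. if odd (Suc j) then of_rat (coeff p (Suc j)) * a ^ (Suc j) else 0)"
    unfolding de by (subst sum.atMost_Suc_shift) simp
  also have "\<dots> = a * Od" unfolding Od_eq sum_distrib_left
    by (rule sum.cong) (auto simp: cqo)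
  finally have eq: "poly (map_poly of_rat p) a = E + a * Od" .
  have "Od \<noteq> 0"
  proof
    assume "Od = 0"
    then have "degree p \<le> degree qo" using mp qo0 unfolding is_min_poly_def Od_def by blast
    then show False using dqo de d_def by simp
  qed
  moreover have "E + a * Od = 0" using eq mp by (simp add: is_min_poly_def)
  then have "a * Od = - E" by (simp add: eq_neg_iff_add_eq_0 add.commute)
  ultimately have "a = - E / Od" by (metis nonzero_mult_div_cancel_right)
  also have "\<dots> \<in> L" by (intro sf_divide[OF L] sf_uminus[OF L] EL OdL)
  finally show "gen_field a \<subseteq> gen_field (a^2)"
    unfolding L_def by (intro gen_field_min gen_field_sf)
qed

definition inL :: "'a::field_char_0 set \<Rightarrow> 'a poly \<Rightarrow> bool" where
  "inL L p \<longleftrightarrow> (\<forall>i. coeff p i \<in> L)"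

context fixes L :: "'a::field_char_0 set" assumes L: "is_subfield L"
begin

lemma inL_0: "inL L 0" by (simp add: inL_def sf_0[OF L])
lemma inL_add: "inL L p \<Longrightarrow> inL L q \<Longrightarrow> inL L (p + q)"
  by (simp add: inL_def sf_add[OF L])
lemma inL_diff: "inL L p \<Longrightarrow> inL L q \<Longrightarrow> inL L (p - q)"
  by (simp add: inL_def sf_diff[OF L])
lemma inL_mult: "inL L p \<Longrightarrow> inL L q \<Longrightarrow> inL L (p * q)"
  by (auto simp: inL_def coeff_mult intro!: sf_sum[OF L] sf_mult[OF L])
lemma inL_smult: "c \<in> L \<Longrightarrow> inL L p \<Longrightarrow> inL L (smult c p)"
  by (simp add: inL_def sf_mult[OF L])
lemma inL_monom: "c \<in> L \<Longrightarrow> inL L (monom c n)"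
  by (simp add: inL_def coeff_monom sf_0[OF L])
lemma inL_pCons: "c \<in> L \<Longrightarrow> inL L p \<Longrightarrow> inL L (pCons c p)"
  by (simp add: inL_def coeff_pCons sf_0[OF L] split: nat.split)
lemma inL_const: "c \<in> L \<Longrightarrow> inL L [:c:]"
  by (simp add: inL_pCons inL_0)
lemma inL_pcompose: "inL L p \<Longrightarrow> inL L q \<Longrightarrow> inL L (p \<circ>\<^sub>p q)"
proof (induction p)
  case 0 then show ?case by (simp add: inL_0)
next
  case (pCons a p)
  have "a \<in> L" "inL L p" using pCons.prems(1) by (auto simp: inL_def coeff_pCons dest: spec[of _ 0] spec[of _ "Suc _"])
  then show ?case using pCons by (simp add: pcompose_pCons inL_add inL_const inL_mult)
qed
lemma inL_of_rat: "inL L (map_poly of_rat p)"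
  by (simp add: inL_def coeff_map_poly sf_of_rat[OF L])

lemma inL_divmod:
  assumes q: "inL L q" "q \<noteq> 0"
  shows "inL L p \<Longrightarrow> \<exists>s r. inL L s \<and> inL L r \<and> p = s * q + r \<and> (r = 0 \<or> degree r < degree q)"
proof (induction "degree p" arbitrary: p rule: less_induct)
  case less
  show ?case
  proof (cases "p = 0 \<or> degree p < degree q")
    case True
    then show ?thesis using less.prems by (intro exI[of _ 0] exI[of _ p]) (auto simp: inL_0)
  next
    case False
    then have p0: "p \<noteq> 0" and dq: "degree q \<le> degree p" by auto
    define t where "t = monom (lead_coeff p / lead_coeff q) (degree p - degree q)"
    define p' where "p' = p - t * q"
    have lq: "lead_coeff q \<noteq> 0" "lead_coeff p \<noteq> 0" using q p0 by auto
    have tL: "inL L t" unfolding t_def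
      by (intro inL_monom sf_divide[OF L]) (use less.prems q in \<open>auto simp: inL_def\<close>)
    have p'L: "inL L p'" unfolding p'_def by (intro inL_diff inL_mult less.prems tL q)
    have ctq: "coeff (t * q) n = (if n < degree p - degree q then 0 else lead_coeff p / lead_coeff q * coeff q (n - (degree p - degree q)))" for n
      by (simp add: t_def coeff_monom_mult)
    have cp': "coeff p' n = 0" if "n \<ge> degree p" for n
    proof (cases "n = degree p")
      case True
      then show ?thesis using dq lq by (simp add: p'_def ctq)
    next
      case False
      then have "n > degree p" using that by simp
      then have "coeff p n = 0" "coeff q (n - (degree p - degree q)) = 0"
        using dq by (auto intro!: coeff_eq_0)
      then show ?thesis by (simp add: p'_def ctq)
    qed
    show ?thesis
    proof (cases "p' = 0")
      case True
      then show ?thesis using tL unfolding p'_def by (intro exI[of _ t] exI[of _ 0]) (auto simp: inL_0)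
    next
      case False
      have "degree p' < degree p"
      proof (rule ccontr)
        assume "\<not> degree p' < degree p"
        then have "coeff p' (degree p') = 0" using cp' by simp
        then show False using False by simp
      qed
      from less.hyps[OF this p'L] obtain s r where sr: "inL L s" "inL L r" "p' = s * q + r" "r = 0 \<or> degree r < degree q"
        by blast
      have "p = (s + t) * q + r" using sr(3) unfolding p'_def by (simp add: algebra_simps)
      then show ?thesis using sr tL by (intro exI[of _ "s + t"] exI[of _ r]) (auto intro: inL_add)
    qed
  qed
qed

end

lemma pow_form:
  fixes \<beta> :: complex
  shows "lead_coeff G = 1 \<Longrightarrow> degree G = k \<Longrightarrow> (\<forall>z. poly G z = 0 \<longrightarrow> z = \<beta>) \<Longrightarrow> G = [:-\<beta>,1:]^k"
proof (induction k arbitrary: G)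
  case 0
  then show ?case by (metis degree_0_id one_pCons power_0)
next
  case (Suc k)
  have "\<not> constant (poly G)" using Suc.prems(2) constant_degree[of G] by simp
  then obtain z where "poly G z = 0" using fundamental_theorem_of_algebra by blast
  then have "poly G \<beta> = 0" using Suc.prems(3) by auto
  then obtain G1 where G: "G = [:-\<beta>,1:] * G1" using poly_eq_0_iff_dvd by (metis dvdE)
  have G10: "G1 \<noteq> 0" using G Suc.prems(1) by auto
  have "degree G = degree [:-\<beta>,1:] + degree G1" unfolding G by (rule degree_mult_eq) (use G10 in auto)
  then have dG1: "degree G1 = k" using Suc.prems(2) by simp
  have "lead_coeff G = lead_coeff [:-\<beta>,1:] * lead_coeff G1" unfolding G by (rule lead_coeff_mult)
  then have lG1: "lead_coeff G1 = 1" using Suc.prems(1) by simp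
  have "\<forall>z. poly G1 z = 0 \<longrightarrow> z = \<beta>" using G Suc.prems(3) by auto
  from Suc.IH[OF lG1 dG1 this] show ?case using G by simp
qed

lemma coeff_lin_pow:
  fixes \<beta> :: "'a::comm_ring_1"
  shows "coeff ([:-\<beta>,1:]^(Suc k)) k = - of_nat (Suc k) * \<beta>"
proof (induction k)
  case 0
  then show ?case by simp
next
  case (Suc k)
  have "[:-\<beta>,1:]^(Suc (Suc k)) = smult (-\<beta>) ([:-\<beta>,1:]^(Suc k)) + pCons 0 ([:-\<beta>,1:]^(Suc k))"
    by (simp add: algebra_simps)
  then have A: "coeff ([:-\<beta>,1:]^(Suc (Suc k))) (Suc k) = -\<beta> * coeff ([:-\<beta>,1:]^(Suc k)) (Suc k) + coeff ([:-\<beta>,1:]^(Suc k)) k"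
    by simp
  have c1: "coeff ([:-\<beta>,1:]^(Suc k)) (Suc k) = 1" by (rule coeff_linear_power)
  have B: "-\<beta> * 1 + (- of_nat (Suc k) * \<beta>) = - of_nat (Suc (Suc k)) * \<beta>"
    by (simp add: algebra_simps)
  show ?case unfolding A c1 Suc.IH B ..
qed

lemma map_of_rat_eq0: "(map_poly (of_rat :: rat \<Rightarrow> 'a::field_char_0) f = 0) = (f = 0)"
proof
  assume "map_poly (of_rat :: rat \<Rightarrow> 'a) f = 0"
  then have "coeff (map_poly (of_rat :: rat \<Rightarrow> 'a) f) i = 0" for i by simp
  then have "coeff f i = 0" for i by (simp add: coeff_map_poly)
  then show "f = 0" by (simp add: poly_eqI)
qed simp

lemma dvd_root: "p dvd q \<Longrightarrow> poly p z = 0 \<Longrightarrow> poly q z = 0"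
  by (auto elim!: dvdE)

lemma two_gen:
  fixes \<alpha> \<beta> :: complex
  assumes f: "f \<noteq> 0" "poly (map_poly of_rat f) \<alpha> = 0"
      and g: "g \<noteq> 0" "poly (map_poly of_rat g) \<beta> = 0"
  shows "\<exists>c::rat. \<beta> \<in> gen_field (\<alpha> + of_rat c * \<beta>)"
proof -
  define fC :: "complex poly" where "fC = map_poly of_rat f"
  define gC :: "complex poly" where "gC = map_poly of_rat g"
  have fC0: "fC \<noteq> 0" and gC0: "gC \<noteq> 0" using f g by (auto simp: fC_def gC_def map_of_rat_eq0)
  define Rf where "Rf = {z. poly fC z = 0}"
  define Rg where "Rg = {z. poly gC z = 0}"
  have fin: "finite Rf" "finite Rg" using fC0 gC0 by (auto simp: Rf_def Rg_def poly_roots_finite)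
  define Bad where "Bad = (\<lambda>(x,z). (x - \<alpha>) / (\<beta> - z)) ` (Rf \<times> Rg)"
  have "finite (insert 0 Bad)" using fin by (simp add: Bad_def)
  moreover have "infinite (range (of_rat :: rat \<Rightarrow> complex))"
  proof -
    have "inj (of_rat :: rat \<Rightarrow> complex)" by (simp add: inj_on_def)
    then show ?thesis using finite_imageD infinite_UNIV_char_0 by blast
  qed
  ultimately obtain c :: rat where c: "of_rat c \<notin> insert 0 Bad"
    by (metis (no_types, lifting) infinite_super rangeE subsetI)
  define \<theta> where "\<theta> = \<alpha> + of_rat c * \<beta>"
  define L where "L = gen_field \<theta>"
  have L: "is_subfield L" by (simp add: L_def gen_field_sf)
  have thL: "\<theta> \<in> L" by (simp add: L_def gen_field_mem)
  define h where "h = fC \<circ>\<^sub>p [:\<theta>, - of_rat c:]"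
  have hL: "inL L h" unfolding h_def fC_def
    by (intro inL_pcompose[OF L] inL_of_rat[OF L] inL_pCons[OF L] inL_const[OF L] thL sf_uminus[OF L] sf_of_rat[OF L])
  have h0: "h \<noteq> 0" unfolding h_def using c fC0 by (subst pcompose_eq_0_iff) auto
  have hb: "poly h \<beta> = 0" using f by (simp add: h_def poly_pcompose \<theta>_def fC_def)
  have gL: "inL L gC" unfolding gC_def by (rule inL_of_rat[OF L])
  define S where "S = {P. P \<noteq> 0 \<and> inL L P \<and> poly P \<beta> = 0}"
  have gS: "gC \<in> S" using gC0 gL g by (simp add: S_def gC_def)
  define n where "n = (LEAST n. \<exists>P. P \<in> S \<and> degree P = n)"
  obtain G0 where G0: "G0 \<in> S" "degree G0 = n"
    using LeastI_ex[of "\<lambda>n. \<exists>P. P \<in> S \<and> degree P = n"] gS unfolding n_def by blast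
  have nmin: "P \<in> S \<Longrightarrow> n \<le> degree P" for P unfolding n_def by (rule Least_le) blast
  define G where "G = smult (inverse (lead_coeff G0)) G0"
  have G00: "G0 \<noteq> 0" "inL L G0" "poly G0 \<beta> = 0" using G0 by (auto simp: S_def)
  have GL: "inL L G" unfolding G_def
    by (intro inL_smult[OF L] sf_inverse[OF L] G00) (use G00 in \<open>simp add: inL_def\<close>)
  have Glc: "lead_coeff G = 1" using G00 by (simp add: G_def)
  have "lead_coeff G0 \<noteq> 0" using G00 by simp
  then have Gd: "degree G = n" using G0 by (simp add: G_def)
  have Gb: "poly G \<beta> = 0" using G00 by (simp add: G_def)
  have G_0: "G \<noteq> 0" using Glc by auto
  have Gdvd: "G dvd P" if "inL L P" "poly P \<beta> = 0" for P
  proof -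
    obtain s r where sr: "inL L s" "inL L r" "P = s * G + r" "r = 0 \<or> degree r < degree G"
      using inL_divmod[OF L GL G_0 \<open>inL L P\<close>] by blast
    have "poly r \<beta> = 0" using sr(3) that(2) Gb by (simp add: algebra_simps)
    then have "r = 0"
    proof (rule contrapos_pp)
      assume "r \<noteq> 0"
      then have "r \<in> S" using \<open>poly r \<beta> = 0\<close> sr(2) by (simp add: S_def)
      then have "n \<le> degree r" by (rule nmin)
      then show "\<not> poly r \<beta> = 0" using sr(4) Gd \<open>r \<noteq> 0\<close> by simp
    qed
    then show ?thesis using sr(3) by simp
  qed
  have roots: "\<forall>z. poly G z = 0 \<longrightarrow> z = \<beta>"
  proof (intro allI impI)
    fix z assume z: "poly G z = 0"
    have zg: "poly gC z = 0" using dvd_root[OF Gdvd[OF gL] z] g by (simp add: gC_def)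
    have zh: "poly h z = 0" using dvd_root[OF Gdvd[OF hL hb] z] .
    show "z = \<beta>"
    proof (rule ccontr)
      assume zb: "z \<noteq> \<beta>"
      define x where "x = \<theta> - of_rat c * z"
      have "x \<in> Rf" using zh by (simp add: Rf_def h_def poly_pcompose x_def mult.commute)
      moreover have "z \<in> Rg" using zg by (simp add: Rg_def)
      ultimately have "(x - \<alpha>) / (\<beta> - z) \<in> Bad" unfolding Bad_def by force
      moreover have "(x - \<alpha>) / (\<beta> - z) = of_rat c" using zb
        by (simp add: x_def \<theta>_def field_simps)
      ultimately show False using c by simp
    qed
  qed
  have "n \<noteq> 0"
  proof
    assume "n = 0"
    then have "G = [:1:]" using Gd Glc by (metis degree_0_id)
    then show False using Gb by simp
  qed
  then obtain k where nk: "n = Suc k" by (cases n) auto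
  have GG: "G = [:-\<beta>,1:]^(Suc k)" using pow_form[OF Glc _ roots] Gd nk by simp
  have "coeff G k \<in> L" using GL by (simp add: inL_def)
  then have "- of_nat (Suc k) * \<beta> \<in> L" using GG coeff_lin_pow[of \<beta> k] by simp
  then have "(- of_nat (Suc k) * \<beta>) / (- of_nat (Suc k)) \<in> L"
    by (intro sf_divide[OF L] sf_uminus[OF L] sf_of_nat[OF L])
  moreover have nz: "(- of_nat (Suc k) :: complex) \<noteq> 0"
    by (metis neg_equal_0_iff_equal of_nat_eq_0_iff nat.distinct(1))
  have "(- of_nat (Suc k) * \<beta>) / (- of_nat (Suc k)) = \<beta>" by (rule nonzero_mult_div_cancel_left[OF nz])
  ultimately have "\<beta> \<in> L" by simp
  then show ?thesis unfolding L_def \<theta>_def by blast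
qed

lemma of_real_of_rat': "(of_real (of_rat q :: real) :: 'a::real_field) = of_rat q"
proof -
  obtain a b where "q = Fract a b" "b > 0" by (cases q) auto
  then show ?thesis by (simp add: of_rat_rat)
qed

lemma poly_of_rat_of_real:
  "poly (map_poly of_rat p) (of_real x :: complex) = of_real (poly (map_poly of_rat p) x)"
  by (simp add: poly_of_rat_sum_le[OF order.refl] of_real_sum of_real_mult of_real_of_rat')

lemma real_sf_image: "is_subfield (L :: real set) \<Longrightarrow> is_subfield ((of_real :: real \<Rightarrow> complex) ` L)"
  unfolding is_subfield_def
  by (auto simp flip: of_real_add of_real_diff of_real_mult of_real_inverse intro!: imageI)

lemma transfer_gen:
  assumes "(of_real y :: complex) \<in> gen_field (of_real x)"
  shows "y \<in> gen_field x"
proof -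
  have "gen_field (of_real x :: complex) \<subseteq> of_real ` gen_field x"
    by (intro gen_field_min real_sf_image gen_field_sf imageI gen_field_mem)
  with assms show ?thesis by auto
qed

lemma two_gen_real:
  fixes \<alpha> \<beta> :: real
  assumes f: "f \<noteq> 0" "poly (map_poly of_rat f) \<alpha> = 0"
      and g: "g \<noteq> 0" "poly (map_poly of_rat g) \<beta> = 0"
  shows "\<exists>c::rat. \<beta> \<in> gen_field (\<alpha> + of_rat c * \<beta>)"
proof -
  have "\<exists>c::rat. (of_real \<beta>::complex) \<in> gen_field (of_real \<alpha> + of_rat c * of_real \<beta>)"
    by (rule two_gen[OF f(1) _ g(1)]) (use f g in \<open>simp_all add: poly_of_rat_of_real\<close>)
  then obtain c :: rat where "(of_real \<beta>::complex) \<in> gen_field (of_real \<alpha> + of_rat c * of_real \<beta>)" ..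
  then have "(of_real \<beta>::complex) \<in> gen_field (of_real (\<alpha> + of_rat c * \<beta>))"
    by (simp add: of_real_of_rat')
  then show ?thesis using transfer_gen by blast
qed

interpretation rv: vector_space "\<lambda>(q::rat) (x::real). of_rat q * x"
  by unfold_locales (auto simp: algebra_simps of_rat_add of_rat_mult)

lemma rnf_alg:
  assumes K: "real_number_field K" and x: "x \<in> K"
  shows "\<exists>p::rat poly. p \<noteq> 0 \<and> poly (map_poly of_rat p) x = 0"
proof -
  from K obtain B where B: "finite B" "B \<subseteq> K" "\<forall>x\<in>K. \<exists>c :: real \<Rightarrow> rat. x = (\<Sum>b\<in>B. of_rat (c b) * b)"
    and Ksf: "is_subfield K"
    unfolding real_number_field_def by blast
  define n where "n = card B"
  define T where "T = (\<lambda>i. x ^ i) ` {..n}"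
  have Kspan: "K \<subseteq> rv.span B"
    using B by (auto simp: rv.span_finite)
  have TK: "T \<subseteq> K" unfolding T_def using sf_power[OF Ksf x] by auto
  show ?thesis
  proof (cases "inj_on (\<lambda>i. x ^ i) {..n}")
    case False
    then obtain i j where ij: "i \<noteq> j" "x ^ i = x ^ j" unfolding inj_on_def by blast
    define p :: "rat poly" where "p = monom 1 i - monom 1 j"
    have "coeff p i = 1" using ij by (simp add: p_def coeff_monom)
    then have "p \<noteq> 0" by auto
    have "map_poly of_rat p = (monom 1 i - monom 1 j :: real poly)"
      by (rule poly_eqI) (simp add: p_def coeff_map_poly coeff_monom of_rat_diff)
    then have "poly (map_poly of_rat p) x = 0" by (simp add: poly_monom ij(2))
    with \<open>p \<noteq> 0\<close> show ?thesis by blast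
  next
    case True
    have "card T = Suc n" unfolding T_def using True by (simp add: card_image)
    then have "\<not> card T \<le> card B" unfolding n_def by simp
    then have "rv.dependent T"
      using rv.independent_span_bound[OF B(1), of T] TK Kspan by blast
    then obtain t u where tu: "finite t" "t \<subseteq> T" "(\<Sum>v\<in>t. of_rat (u v) * v) = 0" "\<exists>v\<in>t. u v \<noteq> 0"
      unfolding rv.dependent_explicit by blast
    define a where "a i = (if x ^ i \<in> t then u (x ^ i) else 0)" for i
    define p :: "rat poly" where "p = (\<Sum>i\<le>n. monom (a i) i)"
    have cp: "coeff p j = (if j \<le> n then a j else 0)" for j
      by (simp add: p_def coeff_sum coeff_monom)
    have dp: "degree p \<le> n" by (rule degree_le) (simp add: cp)
    from tu(4) obtain v where v: "v \<in> t" "u v \<noteq> 0" by blast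
    then obtain i where i: "i \<le> n" "v = x ^ i" using tu(2) unfolding T_def by auto
    have "coeff p i = u v" using i v by (simp add: cp a_def)
    then have p0: "p \<noteq> 0" using v by auto
    have "poly (map_poly of_rat p) x = (\<Sum>i\<le>n. of_rat (a i) * x ^ i)"
      using poly_of_rat_sum_le[OF dp] by (simp add: cp)
    also have "\<dots> = (\<Sum>i\<in>{i\<in>{..n}. x ^ i \<in> t}. of_rat (u (x ^ i)) * x ^ i)"
    proof -
      have "(\<Sum>i\<le>n. of_rat (a i) * x ^ i) = (\<Sum>i\<le>n. if x ^ i \<in> t then of_rat (u (x ^ i)) * x ^ i else 0)"
        by (rule sum.cong) (auto simp: a_def)
      then show ?thesis
        using sum.inter_filter[of "{..n}" "\<lambda>i. of_rat (u (x^i)) * x^i" "\<lambda>i. x^i \<in> t"] by simp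
    qed
    also have "\<dots> = (\<Sum>v\<in>(\<lambda>i. x ^ i) ` {i\<in>{..n}. x ^ i \<in> t}. of_rat (u v) * v)"
      by (rule sum.reindex[symmetric, unfolded comp_def]) (rule inj_on_subset[OF True], auto)
    also have "(\<lambda>i. x ^ i) ` {i\<in>{..n}. x ^ i \<in> t} = t"
      using tu(2) unfolding T_def by auto
    finally have "poly (map_poly of_rat p) x = 0" using tu(3) by simp
    with p0 show ?thesis by blast
  qed
qed

lemma rnf_gen:
  assumes K: "real_number_field K"
  shows "\<exists>\<gamma>. gen_field \<gamma> = K"
proof -
  from K obtain B where B: "finite B" "B \<subseteq> K" "\<forall>x\<in>K. \<exists>c :: real \<Rightarrow> rat. x = (\<Sum>b\<in>B. of_rat (c b) * b)"
    and Ksf: "is_subfield K"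
    unfolding real_number_field_def by blast
  have KB: "gen_set B = K"
  proof
    show "gen_set B \<subseteq> K" by (rule gen_set_min[OF Ksf B(2)])
    show "K \<subseteq> gen_set B"
    proof
      fix x assume "x \<in> K"
      then obtain c where "x = (\<Sum>b\<in>B. of_rat (c b) * b)" using B(3) by blast
      also have "\<dots> \<in> gen_set B"
        using gen_set_sub[of B] by (intro sf_sum gen_set_sf sf_mult sf_of_rat) auto
      finally show "x \<in> gen_set B" .
    qed
  qed
  have "F \<subseteq> K \<Longrightarrow> \<exists>\<gamma>. gen_set F = gen_field \<gamma>" if "finite F" for F
    using that
  proof (induction F rule: finite_induct)
    case empty
    have "gen_set {} = gen_field (0::real)"
    proof
      show "gen_set {} \<subseteq> gen_field (0::real)" by (rule gen_set_min[OF gen_field_sf]) auto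
      show "gen_field 0 \<subseteq> gen_set ({}::real set)" by (rule gen_field_min[OF gen_set_sf sf_0[OF gen_set_sf]])
    qed
    then show ?case by blast
  next
    case (insert b F)
    then obtain \<gamma> where g: "gen_set F = gen_field \<gamma>" by auto
    have "\<gamma> \<in> K" using g gen_field_mem[of \<gamma>] gen_set_min[OF Ksf, of F] insert.prems by auto
    then obtain f where f: "f \<noteq> 0" "poly (map_poly of_rat f) \<gamma> = 0" using rnf_alg[OF K] by blast
    have "b \<in> K" using insert.prems by auto
    then obtain h where h: "h \<noteq> 0" "poly (map_poly of_rat h) b = 0" using rnf_alg[OF K] by blast
    obtain c where c: "b \<in> gen_field (\<gamma> + of_rat c * b)" using two_gen_real[OF f h] by blast
    define \<theta> where "\<theta> = \<gamma> + of_rat c * b"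
    have Lt: "is_subfield (gen_field \<theta>)" by (rule gen_field_sf)
    have "\<gamma> = \<theta> - of_rat c * b" by (simp add: \<theta>_def)
    also have "\<dots> \<in> gen_field \<theta>"
      using c unfolding \<theta>_def[symmetric] by (intro sf_diff[OF Lt] sf_mult[OF Lt] sf_of_rat[OF Lt] gen_field_mem)
    finally have gt: "gen_field \<gamma> \<subseteq> gen_field \<theta>" by (rule gen_field_min[OF Lt])
    have "gen_set (insert b F) = gen_field \<theta>"
    proof
      show "gen_set (insert b F) \<subseteq> gen_field \<theta>"
        using c gt g gen_set_sub[of F] unfolding \<theta>_def[symmetric] by (intro gen_set_min[OF Lt]) auto
      have Li: "is_subfield (gen_set (insert b F))" by (rule gen_set_sf)
      have "gen_set F \<subseteq> gen_set (insert b F)"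
        using gen_set_sub[of "insert b F"] by (intro gen_set_min[OF Li]) auto
      then have "\<gamma> \<in> gen_set (insert b F)" using g gen_field_mem[of \<gamma>] by auto
      moreover have "b \<in> gen_set (insert b F)" using gen_set_sub[of "insert b F"] by auto
      ultimately have "\<theta> \<in> gen_set (insert b F)" unfolding \<theta>_def
        by (intro sf_add[OF Li] sf_mult[OF Li] sf_of_rat[OF Li])
      then show "gen_field \<theta> \<subseteq> gen_set (insert b F)" by (rule gen_field_min[OF Li])
    qed
    then show ?case by blast
  qed
  then show ?thesis using B(1,2) KB by metis
qed

lemma coeff_shift_top:
  fixes a :: "'a::idom"
  shows "degree p \<le> n \<Longrightarrow> coeff (p \<circ>\<^sub>p [:a,1:]) n = coeff p n"
proof (induction p arbitrary: n)
  case 0 then show ?case by simp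
next
  case (pCons c p)
  show ?case
  proof (cases n)
    case 0
    then have "p = 0" using pCons by (auto split: if_splits)
    then show ?thesis using 0 by (simp add: pcompose_pCons)
  next
    case (Suc m)
    have dp: "degree p \<le> m" using pCons.prems Suc by (cases "p = 0") auto
    have "coeff (p \<circ>\<^sub>p [:a,1:]) (Suc m) = 0"
      using dp by (intro coeff_eq_0) (simp add: degree_pcompose)
    then show ?thesis using pCons.IH[OF dp] Suc by (simp add: pcompose_pCons)
  qed
qed

lemma coeff_shift:
  fixes a :: "'a::idom"
  shows "degree p \<le> Suc n \<Longrightarrow> coeff (p \<circ>\<^sub>p [:a,1:]) n = coeff p n + of_nat (Suc n) * a * coeff p (Suc n)"
proof (induction p arbitrary: n)
  case 0 then show ?case by simp
next
  case (pCons c p)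
  show ?case
  proof (cases n)
    case 0
    have dp: "degree p \<le> 0" using pCons.prems 0 by (cases "p = 0") auto
    then obtain c0 where "p = [:c0:]" by (auto elim: degree_eq_zeroE)
    then show ?thesis using 0 by (simp add: pcompose_pCons algebra_simps)
  next
    case (Suc m)
    have dp: "degree p \<le> Suc m" using pCons.prems Suc by (cases "p = 0") auto
    have t: "coeff (p \<circ>\<^sub>p [:a,1:]) (Suc m) = coeff p (Suc m)" by (rule coeff_shift_top[OF dp])
    have "coeff (pCons c p \<circ>\<^sub>p [:a,1:]) n = a * coeff (p \<circ>\<^sub>p [:a,1:]) (Suc m) + coeff (p \<circ>\<^sub>p [:a,1:]) m"
      using Suc by (simp add: pcompose_pCons)
    also have "\<dots> = a * coeff p (Suc m) + (coeff p m + of_nat (Suc m) * a * coeff p (Suc m))"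
      using t pCons.IH[OF dp] by simp
    also have "\<dots> = coeff (pCons c p) n + of_nat (Suc n) * a * coeff (pCons c p) (Suc n)"
      using Suc by (simp add: algebra_simps)
    finally show ?thesis .
  qed
qed

lemma min_poly_exists:
  fixes x :: "'a::field_char_0"
  assumes "p \<noteq> 0" "poly (map_poly of_rat p) x = 0"
  shows "\<exists>p0. is_min_poly x p0"
proof -
  define S where "S = {p :: rat poly. p \<noteq> 0 \<and> poly (map_poly of_rat p) x = 0}"
  have pS: "p \<in> S" using assms by (simp add: S_def)
  define n where "n = (LEAST n. \<exists>P. P \<in> S \<and> degree P = n)"
  obtain G0 where G0: "G0 \<in> S" "degree G0 = n"
    using LeastI_ex[of "\<lambda>n. \<exists>P. P \<in> S \<and> degree P = n"] pS unfolding n_def by blast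
  have nmin: "P \<in> S \<Longrightarrow> n \<le> degree P" for P unfolding n_def by (rule Least_le) blast
  define G where "G = smult (inverse (lead_coeff G0)) G0"
  have G00: "G0 \<noteq> 0" "poly (map_poly of_rat G0) x = 0" using G0 by (auto simp: S_def)
  have lc: "lead_coeff G0 \<noteq> 0" using G00 by simp
  have "map_poly (of_rat :: rat \<Rightarrow> 'a) G = smult (of_rat (inverse (lead_coeff G0))) (map_poly of_rat G0)"
    by (rule poly_eqI) (simp add: G_def coeff_map_poly of_rat_mult)
  then have Gr: "poly (map_poly of_rat G) x = 0" using G00 by simp
  have "is_min_poly x G"
    unfolding is_min_poly_def
  proof (intro conjI allI impI)
    show "G \<noteq> 0" using lc G00 by (simp add: G_def)
    show "lead_coeff G = 1" using lc by (simp add: G_def)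
    show "poly (map_poly of_rat G) x = 0" by (rule Gr)
    fix q :: "rat poly" assume "q \<noteq> 0 \<and> poly (map_poly of_rat q) x = 0"
    then have "q \<in> S" by (simp add: S_def)
    then show "degree G \<le> degree q" using nmin G0 lc by (simp add: G_def)
  qed
  then show ?thesis ..
qed

lemma shift_min_poly:
  fixes \<gamma> :: "'a::field_char_0"
  assumes mp: "is_min_poly \<gamma> p0"
  shows "is_min_poly (\<gamma> + of_rat q) (p0 \<circ>\<^sub>p [:-q,1:])"
  unfolding is_min_poly_def
proof (intro conjI allI impI)
  have p0: "p0 \<noteq> 0" "lead_coeff p0 = 1" "poly (map_poly of_rat p0) \<gamma> = 0"
    using mp by (auto simp: is_min_poly_def)
  show "p0 \<circ>\<^sub>p [:- q, 1:] \<noteq> 0" using p0 by (subst pcompose_eq_0_iff) auto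
  show "lead_coeff (p0 \<circ>\<^sub>p [:- q, 1:]) = 1" using p0 by (subst lead_coeff_comp) auto
  have lin: "poly (map_poly of_rat [:c, 1:]) y = y + of_rat c" for c :: rat and y :: 'a
    by (simp add: map_poly_pCons)
  show "poly (map_poly of_rat (p0 \<circ>\<^sub>p [:- q, 1:])) (\<gamma> + of_rat q) = 0"
    using p0 by (simp add: poly_of_rat_pcompose lin of_rat_minus)
  fix r :: "rat poly" assume r: "r \<noteq> 0 \<and> poly (map_poly of_rat r) (\<gamma> + of_rat q) = 0"
  have "r \<circ>\<^sub>p [:q,1:] \<noteq> 0" using r by (subst pcompose_eq_0_iff) auto
  moreover have "poly (map_poly of_rat (r \<circ>\<^sub>p [:q,1:])) \<gamma> = 0"
    using r by (simp add: poly_of_rat_pcompose lin)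
  ultimately have "degree p0 \<le> degree (r \<circ>\<^sub>p [:q,1:])" using mp by (auto simp: is_min_poly_def)
  then show "degree (p0 \<circ>\<^sub>p [:- q, 1:]) \<le> degree r" by (simp add: degree_pcompose)
qed

lemma shift_odd:
  fixes \<gamma> :: "'a::field_char_0"
  assumes mp: "is_min_poly \<gamma> p0"
      and q: "q \<noteq> coeff p0 (degree p0 - 1) / of_nat (degree p0)"
  shows "min_poly_has_odd_term (\<gamma> + of_rat q)"
proof -
  have p0: "p0 \<noteq> 0" "lead_coeff p0 = 1" "poly (map_poly of_rat p0) \<gamma> = 0"
    using mp by (auto simp: is_min_poly_def)
  define d where "d = degree p0"
  have "d \<noteq> 0"
  proof
    assume "d = 0"
    then have "p0 = [:1:]" using p0(2) unfolding d_def by (metis degree_0_id)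
    then show False using p0(3) by (simp add: map_of_rat_const)
  qed
  then obtain e where de: "d = Suc e" by (cases d) auto
  define P where "P = p0 \<circ>\<^sub>p [:-q,1:]"
  have mP: "is_min_poly (\<gamma> + of_rat q) P" unfolding P_def by (rule shift_min_poly[OF mp])
  have "\<exists>k. odd k \<and> coeff P k \<noteq> 0"
  proof (cases "odd d")
    case True
    have "coeff P d = 1" unfolding P_def using p0(2) coeff_shift_top[of p0 d "-q"]
      by (simp add: d_def)
    then show ?thesis using True by (intro exI[of _ d]) auto
  next
    case False
    have "coeff P e = coeff p0 e + of_nat d * (-q) * 1"
      unfolding P_def using coeff_shift[of p0 e "-q"] de p0(2) by (simp add: d_def)
    moreover have "coeff p0 e + of_nat d * (-q) \<noteq> 0"
    proof
      assume "coeff p0 e + of_nat d * (-q) = 0"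
      then have "q = coeff p0 e / of_nat d" using de by (simp add: field_simps)
      then show False using q de d_def by simp
    qed
    ultimately have "coeff P e \<noteq> 0" by simp
    moreover have "odd e" using False de by simp
    ultimately show ?thesis by blast
  qed
  then show ?thesis unfolding min_poly_has_odd_term_def using mP by blast
qed

theorem claim3p5:
  shows "(\<forall>\<alpha> :: complex. algebraic \<alpha> \<and> min_poly_has_odd_term \<alpha> \<longrightarrow>
            gen_field \<alpha> = gen_field (\<alpha>\<^sup>2)) \<and>
         (\<forall>K :: real set. real_number_field K \<longrightarrow>
            closure {\<alpha>. gen_field \<alpha> = K \<and> min_poly_has_odd_term \<alpha>} = UNIV)"
proof (intro conjI allI impI)
  fix \<alpha> :: complex assume "algebraic \<alpha> \<and> min_poly_has_odd_term \<alpha>"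
  then obtain p k where "is_min_poly \<alpha> p" "odd k" "coeff p k \<noteq> 0"
    unfolding min_poly_has_odd_term_def by blast
  then show "gen_field \<alpha> = gen_field (\<alpha>\<^sup>2)" by (rule part1)
next
  fix K :: "real set" assume K: "real_number_field K"
  obtain \<gamma> where g: "gen_field \<gamma> = K" using rnf_gen[OF K] by blast
  have Ksf: "is_subfield K" using K by (simp add: real_number_field_def)
  have "\<gamma> \<in> K" using g gen_field_mem by blast
  then obtain f where "f \<noteq> 0" "poly (map_poly of_rat f) \<gamma> = 0" using rnf_alg[OF K] by blast
  then obtain p0 where mp: "is_min_poly \<gamma> p0" using min_poly_exists by blast
  define b0 where "b0 = coeff p0 (degree p0 - 1) / of_nat (degree p0)"
  define S where "S = {\<alpha>. gen_field \<alpha> = K \<and> min_poly_has_odd_term \<alpha>}"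
  have inS: "\<gamma> + of_rat q \<in> S" if "q \<noteq> b0" for q
    using shift_odd[OF mp, of q] that g gen_field_shift[of \<gamma> q] by (simp add: S_def b0_def)
  show "closure {\<alpha>. gen_field \<alpha> = K \<and> min_poly_has_odd_term \<alpha>} = UNIV"
    unfolding S_def[symmetric]
  proof (intro set_eqI iffI UNIV_I)
    fix y :: real
    show "y \<in> closure S" unfolding closure_approachable
    proof (intro allI impI)
      fix e :: real assume e: "e > 0"
      obtain r1 where r1: "r1 \<in> \<rat>" "y - \<gamma> < r1" "r1 < y - \<gamma> + e"
        using Rats_dense_in_real[of "y - \<gamma>" "y - \<gamma> + e"] e by auto
      obtain r2 where r2: "r2 \<in> \<rat>" "y - \<gamma> < r2" "r2 < r1"
        using Rats_dense_in_real[of "y - \<gamma>" r1] r1 by auto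
      obtain q1 where q1: "r1 = of_rat q1" using r1(1) Rats_cases by blast
      obtain q2 where q2: "r2 = of_rat q2" using r2(1) Rats_cases by blast
      have "q1 \<noteq> q2" using q1 q2 r2(3) by auto
      then obtain q where q: "q \<noteq> b0" "q = q1 \<or> q = q2" by (cases "q1 = b0") auto
      have "y - \<gamma> < of_rat q \<and> of_rat q < y - \<gamma> + e" using q(2) q1 q2 r1 r2 by auto
      then have "dist (\<gamma> + of_rat q) y < e" by (simp add: dist_real_def abs_if)
      then show "\<exists>z\<in>S. dist z y < e" using inS[OF q(1)] by blast
    qed
  qed
qed

end
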